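(* Let $F$, $H$, $X$, $\Omega$, $Q$ and the sequences generated by the IneIREG method be as described in the context. Suppose: $(\eta_k)$ is nonincreasing; $\alpha_0\in[0,1]$ and $(\alpha_k/\eta_k)$ is nonincreasing; $\lambda_k\in[\underline\lambda,\overline\lambda]$ for all $k\ge0$ with $0<\underline\lambda\le\overline\lambda\le1/(L_F+\eta_0L_H)$; and $\sum_{k=0}^\infty\delta_k\eta_k^{-1}<+\infty$. For $k\ge1$ let $\Lambda_k=\sum_{j=0}^{k-1}\lambda_j$ and $\overline y_k=\Lambda_k^{-1}\sum_{j=0}^{k-1}\lambda_jy_j$. Then for all $k\ge1$, $$-B_H\,\mathrm{dist}(\overline y_k,Q)\le\mathrm{Gap}(\overline y_k,H,Q)\le\frac{1}{k\eta_k}\Big(\frac{D_X^2}{2\underline\lambda}\Big)+\frac{\sum_{j=0}^{k-1}\delta_j\eta_j^{-1}}{k}\Big(\frac{1}{2\underline\lambda}\Big).$$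
   Context: Work in $\mathbb{R}^n$ with Euclidean inner product $\langle\cdot,\cdot\rangle$ and norm $\|\cdot\|$. The maps $F\colon \mathrm{Dom}\,F\to\mathbb{R}^n$ and $H\colon\mathrm{Dom}\,H\to\mathbb{R}^n$ are monotone and Lipschitz continuous with constants $L_F>0$ and $L_H>0$. $X$ is a nonempty compact convex set and $\Omega$ a nonempty closed convex set with $X\subset\Omega\subset\mathrm{Dom}\,F\cap\mathrm{Dom}\,H$; $P_X,P_\Omega$ denote orthogonal projections. $Q:=\{x\in X:\langle F(x),y-x\rangle\ge0\ \forall y\in X\}$ is assumed nonempty. $D_X:=\sup_{x,y\in X}\|x-y\|$, $B_H:=\sup_{x\in Q}\|H(x)\|$, $\mathrm{dist}(y,Q)$ is the Euclidean distance to $Q$. $\mathrm{Gap}(z,H,Q):=\sup_{x\in Q}\langle H(x),z-x\rangle$. IneIREG method: start with $x_0=x_{-1}\in X$; for $k=0,1,\dots$, with parameters $\alpha_k\ge0$, $\lambda_k>0$, $\eta_k>0$, set $w_k=x_k+\alpha_k(x_k-x_{k-1})$, $w'_k=P_\Omega(w_k)$, $y_k=P_X\big(w_k-\lambda_k(F(w'_k)+\eta_kH(w'_k))\big)$, $x_{k+1}=P_X\big(w_k-\lambda_k(F(y_k)+\eta_kH(y_k))\big)$. Also $\delta_k:=\alpha_k(1+\alpha_k)\|x_k-x_{k-1}\|^2$ for $k\ge0$. *)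

theory Defs
  imports "HOL-Analysis.Analysis"
begin

definition monotone_op :: "'a::real_inner set \<Rightarrow> ('a \<Rightarrow> 'a) \<Rightarrow> bool" where
  "monotone_op D F \<longleftrightarrow> (\<forall>x\<in>D. \<forall>y\<in>D. 0 \<le> (F x - F y) \<bullet> (x - y))"

abbreviation proj :: "'a::euclidean_space set \<Rightarrow> 'a \<Rightarrow> 'a" where
  "proj S x \<equiv> closest_point S x"

definition VI_sol :: "('a::real_inner \<Rightarrow> 'a) \<Rightarrow> 'a set \<Rightarrow> 'a set" where
  "VI_sol F X = {x \<in> X. \<forall>y\<in>X. 0 \<le> F x \<bullet> (y - x)}"

definition Gap :: "'a::real_inner \<Rightarrow> ('a \<Rightarrow> 'a) \<Rightarrow> 'a set \<Rightarrow> real" where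
  "Gap z H Q = (SUP x\<in>Q. H x \<bullet> (z - x))"

definition bound_on :: "('a::real_normed_vector \<Rightarrow> 'a) \<Rightarrow> 'a set \<Rightarrow> real" where
  "bound_on H Q = (SUP x\<in>Q. norm (H x))"

end

theory Submission
  imports Defs
begin

lemma eg_step:
  fixes G :: "'a::euclidean_space \<Rightarrow> 'a"
  assumes X: "closed X" "convex X" "X \<noteq> {}" and Om: "closed \<Omega>" "convex \<Omega>" "X \<subseteq> \<Omega>"
    and lipG: "\<And>a b. a\<in>\<Omega> \<Longrightarrow> b\<in>\<Omega> \<Longrightarrow> norm (G a - G b) \<le> L * norm (a - b)"
    and lam: "lam > 0" "lam * L \<le> 1" "L \<ge> 0"
    and w': "w' = closest_point \<Omega> w"
    and y: "y = closest_point X (w - lam *\<^sub>R G w')"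
    and x1: "x1 = closest_point X (w - lam *\<^sub>R G y)"
    and z: "z \<in> X"
  shows "(norm (x1 - z))\<^sup>2 \<le> (norm (w - z))\<^sup>2 + 2 * lam * (G y \<bullet> (z - y))"
proof -
  have Omne: "\<Omega> \<noteq> {}" using X(3) Om(3) by blast
  have yX: "y \<in> X" using y closest_point_in_set[OF X(1,3)] by simp
  have x1X: "x1 \<in> X" using x1 closest_point_in_set[OF X(1,3)] by simp
  have w'O: "w' \<in> \<Omega>" using w' closest_point_in_set[OF Om(1) Omne] by simp
  have yO: "y \<in> \<Omega>" using yX Om(3) by blast
  define u where "u = x1 - y"
  define v where "v = w - y"
  define e where "e = z - y"
  define g where "g = G y"
  define g' where "g' = G w'"
  have h1: "(v - u - lam *\<^sub>R g) \<bullet> (e - u) \<le> 0"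
    using closest_point_dot[OF X(2,1) z, of "w - lam *\<^sub>R G y"] x1
    unfolding u_def v_def e_def g_def by (simp add: algebra_simps)
  have h2: "(v - lam *\<^sub>R g') \<bullet> u \<le> 0"
    using closest_point_dot[OF X(2,1) x1X, of "w - lam *\<^sub>R G w'"] y
    unfolding u_def v_def g'_def by (simp add: algebra_simps)
  have h3: "norm (g' - g) \<le> L * norm (w' - y)"
    using lipG[OF w'O yO] unfolding g_def g'_def .
  have h4: "norm (w' - y) \<le> norm v"
    using closest_point_lipschitz[OF Om(2,1) Omne, of w y] closest_point_self[OF yO] w'
    unfolding v_def by (simp add: dist_norm)
  have h5: "(g' - g) \<bullet> u \<le> L * norm v * norm u"
  proof -
    have "(g' - g) \<bullet> u \<le> norm (g' - g) * norm u" by (rule norm_cauchy_schwarz)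
    also have "\<dots> \<le> L * norm (w' - y) * norm u" using h3 by (simp add: mult_right_mono)
    also have "\<dots> \<le> L * norm v * norm u" using h4 lam(3)
      by (simp add: mult_left_mono mult_right_mono)
    finally show ?thesis .
  qed
  have h6: "lam * ((g' - g) \<bullet> u) \<le> norm v * norm u"
  proof -
    have "lam * ((g' - g) \<bullet> u) \<le> lam * (L * norm v * norm u)"
      using h5 lam(1) by (simp add: mult_left_mono)
    also have "\<dots> = (lam * L) * (norm v * norm u)" by simp
    also have "\<dots> \<le> 1 * (norm v * norm u)"
      using lam(2) by (intro mult_right_mono) auto
    finally show ?thesis by simp
  qed
  have h7: "2 * (norm v * norm u) \<le> (norm v)\<^sup>2 + (norm u)\<^sup>2"
    using sum_squares_bound[of "norm v" "norm u"] by (simp add: power2_eq_square algebra_simps)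
  have E1: "(v - u - lam *\<^sub>R g) \<bullet> (e - u) = v \<bullet> e - v \<bullet> u - u \<bullet> e + u \<bullet> u - lam * (g \<bullet> e) + lam * (g \<bullet> u)"
    by (simp add: inner_diff_left inner_diff_right inner_commute algebra_simps)
  have E2: "(v - lam *\<^sub>R g') \<bullet> u = v \<bullet> u - lam * (g' \<bullet> u)"
    by (simp add: inner_diff_left)
  have E3: "lam * ((g' - g) \<bullet> u) = lam * (g' \<bullet> u) - lam * (g \<bullet> u)"
    by (simp add: inner_diff_left algebra_simps)
  have E4: "(norm (x1 - z))\<^sup>2 = u \<bullet> u - 2 * (u \<bullet> e) + e \<bullet> e"
    unfolding u_def e_def by (simp add: power2_norm_eq_inner inner_diff_left inner_diff_right inner_commute algebra_simps)
  have E5: "(norm (w - z))\<^sup>2 = v \<bullet> v - 2 * (v \<bullet> e) + e \<bullet> e"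
    unfolding v_def e_def by (simp add: power2_norm_eq_inner inner_diff_left inner_diff_right inner_commute algebra_simps)
  have E6: "(norm v)\<^sup>2 = v \<bullet> v" "(norm u)\<^sup>2 = u \<bullet> u" by (simp_all add: power2_norm_eq_inner)
  have E7: "2 * lam * (G y \<bullet> (z - y)) = 2 * (lam * (g \<bullet> e))" unfolding g_def e_def by simp
  show ?thesis using h1 h2 h6 h7 E1 E2 E3 E4 E5 E6 E7 by linarith
qed

lemma inertial_identity:
  fixes p q :: "'a::real_inner"
  shows "(norm ((1 + a) *\<^sub>R p - a *\<^sub>R q))\<^sup>2 = (1 + a) * (norm p)\<^sup>2 - a * (norm q)\<^sup>2 + a * (1 + a) * (norm (p - q))\<^sup>2"
  by (simp add: power2_norm_eq_inner inner_diff_left inner_diff_right inner_commute algebra_simps)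

theorem proposition3p3:
  fixes F H :: "real ^ 'n \<Rightarrow> real ^ 'n"
    and D X \<Omega> :: "(real ^ 'n) set"
    and L_F L_H lam_lo lam_hi :: real
    and \<alpha> lam \<eta> :: "nat \<Rightarrow> real"
    and x w w' y :: "nat \<Rightarrow> real ^ 'n"
  assumes monoF: "monotone_op D F" and monoH: "monotone_op D H"
    and LF_pos: "L_F > 0" and LH_pos: "L_H > 0"
    and lipF: "L_F-lipschitz_on D F" and lipH: "L_H-lipschitz_on D H"
    and X_ne: "X \<noteq> {}" and X_compact: "compact X" and X_convex: "convex X"
    and Om_closed: "closed \<Omega>" and Om_convex: "convex \<Omega>"
    and X_sub: "X \<subseteq> \<Omega>" and Om_sub: "\<Omega> \<subseteq> D"
    and Q_ne: "VI_sol F X \<noteq> {}"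
    and alpha_nn: "\<And>k. \<alpha> k \<ge> 0" and lam_pos: "\<And>k. lam k > 0" and eta_pos: "\<And>k. \<eta> k > 0"
    and x0: "x 0 \<in> X"
    and w_def: "\<And>k. w k = x k + \<alpha> k *\<^sub>R (x k - x (k - 1))"
    and w'_def: "\<And>k. w' k = proj \<Omega> (w k)"
    and y_def: "\<And>k. y k = proj X (w k - lam k *\<^sub>R (F (w' k) + \<eta> k *\<^sub>R H (w' k)))"
    and x_def: "\<And>k. x (Suc k) = proj X (w k - lam k *\<^sub>R (F (y k) + \<eta> k *\<^sub>R H (y k)))"
    and eta_dec: "decseq \<eta>"
    and alpha0: "0 \<le> \<alpha> 0 \<and> \<alpha> 0 \<le> 1"
    and alpha_eta_dec: "decseq (\<lambda>k. \<alpha> k / \<eta> k)"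
    and lam_bounds: "\<And>k. lam_lo \<le> lam k \<and> lam k \<le> lam_hi"
    and lam_lo_pos: "0 < lam_lo" and lam_lo_hi: "lam_lo \<le> lam_hi"
    and lam_hi_le: "lam_hi \<le> 1 / (L_F + \<eta> 0 * L_H)"
    and delta_summable: "summable (\<lambda>k. \<alpha> k * (1 + \<alpha> k) * (norm (x k - x (k - 1)))\<^sup>2 / \<eta> k)"
  shows "\<forall>k\<ge>1.
    (let \<Lambda> = (\<Sum>j<k. lam j);
         ybar = (1 / \<Lambda>) *\<^sub>R (\<Sum>j<k. lam j *\<^sub>R y j);
         \<delta> = (\<lambda>j. \<alpha> j * (1 + \<alpha> j) * (norm (x j - x (j - 1)))\<^sup>2)
     in - bound_on H (VI_sol F X) * infdist ybar (VI_sol F X) \<le> Gap ybar H (VI_sol F X)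
        \<and> Gap ybar H (VI_sol F X)
            \<le> 1 / (real k * \<eta> k) * ((diameter X)\<^sup>2 / (2 * lam_lo))
              + (\<Sum>j<k. \<delta> j / \<eta> j) / real k * (1 / (2 * lam_lo)))"
proof (intro allI impI)
  fix k :: nat assume k1: "k \<ge> 1"
  define Q where "Q = VI_sol F X"
  define Dg where "Dg = (diameter X)\<^sup>2"
  define G where "G = (\<lambda>j z. F z + \<eta> j *\<^sub>R H z)"
  define \<delta> where "\<delta> = (\<lambda>j. \<alpha> j * (1 + \<alpha> j) * (norm (x j - x (j - 1)))\<^sup>2)"
  define \<Lambda> where "\<Lambda> = (\<Sum>j<k. lam j)"
  define ybar where "ybar = (1 / \<Lambda>) *\<^sub>R (\<Sum>j<k. lam j *\<^sub>R y j)"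
  define b where "b = (\<lambda>j. 1 / \<eta> j)"
  define c where "c = (\<lambda>j. \<alpha> j / \<eta> j)"
  define S where "S = (\<Sum>j<k. \<delta> j / \<eta> j)"
  have Xcl: "closed X" using X_compact by (rule compact_imp_closed)
  have Xbd: "bounded X" using X_compact by (rule compact_imp_bounded)
  have QX: "Q \<subseteq> X" unfolding Q_def VI_sol_def by auto
  have Qne: "Q \<noteq> {}" using Q_ne unfolding Q_def .
  have XD: "X \<subseteq> D" using X_sub Om_sub by blast
  have xX: "x j \<in> X" for j
  proof (cases j)
    case 0 then show ?thesis using x0 by simp
  next
    case (Suc i) then show ?thesis using x_def[of i] closest_point_in_set[OF Xcl X_ne] by simp
  qed
  have yX: "y j \<in> X" for j using y_def[of j] closest_point_in_set[OF Xcl X_ne] by simp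
  have Dg_nn: "0 \<le> Dg" unfolding Dg_def by simp
  have aD: "(norm (x j - q))\<^sup>2 \<le> Dg" if "q \<in> X" for j q
  proof -
    have "norm (x j - q) \<le> diameter X"
      using diameter_bounded_bound[OF Xbd xX that] by (simp add: dist_norm)
    then show ?thesis unfolding Dg_def by (intro power_mono) auto
  qed
  have eta_le0: "\<eta> j \<le> \<eta> 0" for j using eta_dec by (simp add: decseq_def)
  have Glip: "norm (G j a - G j a') \<le> (L_F + \<eta> j * L_H) * norm (a - a')"
    if "a \<in> \<Omega>" "a' \<in> \<Omega>" for j a a'
  proof -
    have aD': "a \<in> D" "a' \<in> D" using that Om_sub by auto
    have f: "norm (F a - F a') \<le> L_F * norm (a - a')"
      using lipschitz_onD[OF lipF aD'] by (simp add: dist_norm)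
    have h: "norm (H a - H a') \<le> L_H * norm (a - a')"
      using lipschitz_onD[OF lipH aD'] by (simp add: dist_norm)
    have "G j a - G j a' = (F a - F a') + \<eta> j *\<^sub>R (H a - H a')"
      unfolding G_def by (simp add: algebra_simps)
    then have "norm (G j a - G j a') \<le> norm (F a - F a') + \<eta> j * norm (H a - H a')"
      using norm_triangle_ineq[of "F a - F a'" "\<eta> j *\<^sub>R (H a - H a')"] eta_pos[of j] by simp
    also have "\<dots> \<le> L_F * norm (a - a') + \<eta> j * (L_H * norm (a - a'))"
      using f h eta_pos[of j] by (intro add_mono mult_left_mono) auto
    finally show ?thesis by (simp add: algebra_simps)
  qed
  have lamL: "lam j * (L_F + \<eta> j * L_H) \<le> 1" for j
  proof -
    have pos: "0 < L_F + \<eta> 0 * L_H" using LF_pos LH_pos eta_pos[of 0] by (simp add: add_pos_nonneg)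
    have "lam j * (L_F + \<eta> j * L_H) \<le> lam j * (L_F + \<eta> 0 * L_H)"
      using eta_le0[of j] LH_pos lam_pos[of j] by (intro mult_left_mono) auto
    also have "\<dots> \<le> lam_hi * (L_F + \<eta> 0 * L_H)"
      using lam_bounds[of j] pos by (intro mult_right_mono) auto
    also have "\<dots> \<le> 1" using lam_hi_le pos by (simp add: le_divide_eq)
    finally show ?thesis .
  qed
  have step: "2 * lam j * \<eta> j * (H q \<bullet> (y j - q)) \<le> (norm (w j - q))\<^sup>2 - (norm (x (Suc j) - q))\<^sup>2"
    if qQ: "q \<in> Q" for j q
  proof -
    have qX: "q \<in> X" using qQ QX by blast
    have qD: "q \<in> D" "y j \<in> D" using qX yX[of j] XD by auto
    have E: "(norm (x (Suc j) - q))\<^sup>2 \<le> (norm (w j - q))\<^sup>2 + 2 * lam j * (G j (y j) \<bullet> (q - y j))"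
    proof (rule eg_step[OF Xcl X_convex X_ne Om_closed Om_convex X_sub])
      show "\<And>a b. a \<in> \<Omega> \<Longrightarrow> b \<in> \<Omega> \<Longrightarrow> norm (G j a - G j b) \<le> (L_F + \<eta> j * L_H) * norm (a - b)"
        by (rule Glip)
      show "lam j > 0" by (rule lam_pos)
      show "lam j * (L_F + \<eta> j * L_H) \<le> 1" by (rule lamL)
      show "0 \<le> L_F + \<eta> j * L_H" using LF_pos LH_pos eta_pos[of j] by simp
      show "w' j = closest_point \<Omega> (w j)" by (rule w'_def)
      show "y j = closest_point X (w j - lam j *\<^sub>R G j (w' j))" unfolding G_def by (rule y_def)
      show "x (Suc j) = closest_point X (w j - lam j *\<^sub>R G j (y j))" unfolding G_def by (rule x_def)
      show "q \<in> X" by (rule qX)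
    qed
    have m1: "0 \<le> (F q - F (y j)) \<bullet> (q - y j)" using monoF qD unfolding monotone_op_def by blast
    have m2: "0 \<le> (H q - H (y j)) \<bullet> (q - y j)" using monoH qD unfolding monotone_op_def by blast
    have vi: "0 \<le> F q \<bullet> (y j - q)" using qQ yX[of j] unfolding Q_def VI_sol_def by blast
    have i1: "F (y j) \<bullet> (q - y j) \<le> 0"
    proof -
      have "F q \<bullet> (q - y j) = - (F q \<bullet> (y j - q))" by (simp add: inner_diff_right)
      then show ?thesis using m1 vi by (simp add: inner_diff_left)
    qed
    have i2: "H (y j) \<bullet> (q - y j) \<le> - (H q \<bullet> (y j - q))"
    proof -
      have "H q \<bullet> (q - y j) = - (H q \<bullet> (y j - q))" by (simp add: inner_diff_right)
      then show ?thesis using m2 by (simp add: inner_diff_left)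
    qed
    have "G j (y j) \<bullet> (q - y j) = F (y j) \<bullet> (q - y j) + \<eta> j * (H (y j) \<bullet> (q - y j))"
      unfolding G_def by (simp add: inner_add_left)
    also have "\<dots> \<le> \<eta> j * (- (H q \<bullet> (y j - q)))"
      using i1 i2 eta_pos[of j] mult_left_mono[OF i2, of "\<eta> j"] by simp
    finally have "2 * lam j * (G j (y j) \<bullet> (q - y j)) \<le> 2 * lam j * (\<eta> j * (- (H q \<bullet> (y j - q))))"
      using lam_pos[of j] by (intro mult_left_mono) auto
    then show ?thesis using E by (simp add: algebra_simps)
  qed
  have wid: "(norm (w j - q))\<^sup>2 = (1 + \<alpha> j) * (norm (x j - q))\<^sup>2 - \<alpha> j * (norm (x (j - 1) - q))\<^sup>2 + \<delta> j" for j q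
  proof -
    have "w j - q = (1 + \<alpha> j) *\<^sub>R (x j - q) - \<alpha> j *\<^sub>R (x (j - 1) - q)"
      using w_def[of j] by (simp add: algebra_simps)
    moreover have "(x j - q) - (x (j - 1) - q) = x j - x (j - 1)" by simp
    ultimately show ?thesis unfolding \<delta>_def using inertial_identity[of "\<alpha> j" "x j - q" "x (j - 1) - q"] by simp
  qed
  have b_mono: "b (j - 1) \<le> b j" for j
    unfolding b_def using eta_dec eta_pos[of j] eta_pos[of "j-1"]
    by (simp add: decseq_def frac_le)
  have c_mono: "c j \<le> c (j - 1)" for j
    unfolding c_def using alpha_eta_dec by (simp add: decseq_def)
  have c_nn: "0 \<le> c j" for j unfolding c_def using alpha_nn[of j] eta_pos[of j] by simp
  have bc0: "c 0 \<le> b 0" unfolding b_def c_def using alpha0 eta_pos[of 0] by (simp add: divide_right_mono)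
  have main: "2 * (\<Sum>j<k. lam j * (H q \<bullet> (y j - q))) \<le> b k * Dg + S" if qQ: "q \<in> Q" for q
  proof -
    have qX: "q \<in> X" using qQ QX by blast
    define a where "a = (\<lambda>j. (norm (x j - q))\<^sup>2)"
    have aD': "a j \<le> Dg" for j unfolding a_def using aD[OF qX] .
    have a_nn: "0 \<le> a j" for j unfolding a_def by simp
    have st: "2 * (lam j * (H q \<bullet> (y j - q))) \<le> b j * a j + c j * a j - c j * a (j - 1) + \<delta> j / \<eta> j - b j * a (Suc j)" for j
    proof -
      have "2 * lam j * \<eta> j * (H q \<bullet> (y j - q)) \<le> (1 + \<alpha> j) * a j - \<alpha> j * a (j - 1) + \<delta> j - a (Suc j)"
        using step[OF qQ, of j] wid[of j q] unfolding a_def by simp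
      then have "(2 * lam j * \<eta> j * (H q \<bullet> (y j - q))) / \<eta> j \<le> ((1 + \<alpha> j) * a j - \<alpha> j * a (j - 1) + \<delta> j - a (Suc j)) / \<eta> j"
        using eta_pos[of j] by (intro divide_right_mono) auto
      moreover have "(2 * lam j * \<eta> j * (H q \<bullet> (y j - q))) / \<eta> j = 2 * (lam j * (H q \<bullet> (y j - q)))"
        using eta_pos[of j] by simp
      moreover have "((1 + \<alpha> j) * a j - \<alpha> j * a (j - 1) + \<delta> j - a (Suc j)) / \<eta> j = b j * a j + c j * a j - c j * a (j - 1) + \<delta> j / \<eta> j - b j * a (Suc j)"
        unfolding b_def c_def using eta_pos[of j] by (simp add: field_simps)
      ultimately show ?thesis by simp
    qed
    have ind: "2 * (\<Sum>j<n. lam j * (H q \<bullet> (y j - q))) \<le> (b (n - 1) - c (n - 1)) * Dg - b (n - 1) * a n + c (n - 1) * a (n - 1) + (\<Sum>j<n. \<delta> j / \<eta> j)" for n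
    proof (induction n)
      case 0
      have "0 \<le> (b 0 - c 0) * (Dg - a 0)" using bc0 aD'[of 0] by simp
      then show ?case by (simp add: algebra_simps)
    next
      case (Suc n)
      have p1: "0 \<le> (b n - b (n - 1)) * (Dg - a n)" using b_mono[of n] aD'[of n] by simp
      have p2: "0 \<le> (c (n - 1) - c n) * (Dg - a (n - 1))" using c_mono[of n] aD'[of "n - 1"] by simp
      have p1': "b n * a n - b (n - 1) * a n \<le> b n * Dg - b (n - 1) * Dg" using p1 by (simp add: algebra_simps)
      have p2': "c (n - 1) * a (n - 1) - c n * a (n - 1) \<le> c (n - 1) * Dg - c n * Dg" using p2 by (simp add: algebra_simps)
      have "2 * (\<Sum>j<Suc n. lam j * (H q \<bullet> (y j - q))) = 2 * (\<Sum>j<n. lam j * (H q \<bullet> (y j - q))) + 2 * (lam n * (H q \<bullet> (y n - q)))"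
        by simp
      then show ?case using Suc.IH st[of n] p1' p2' by (simp add: algebra_simps)
    qed
    have "2 * (\<Sum>j<k. lam j * (H q \<bullet> (y j - q))) \<le> (b (k - 1) - c (k - 1)) * Dg - b (k - 1) * a k + c (k - 1) * a (k - 1) + S"
      using ind[of k] unfolding S_def .
    moreover have "c (k - 1) * a (k - 1) \<le> c (k - 1) * Dg" using aD' c_nn by (intro mult_left_mono) auto
    moreover have "0 \<le> b (k - 1) * a k" unfolding b_def using eta_pos[of "k - 1"] a_nn[of k] by simp
    moreover have "b (k - 1) * Dg \<le> b k * Dg" using b_mono Dg_nn by (intro mult_right_mono) auto
    ultimately show ?thesis by (simp add: algebra_simps)
  qed
  have Lam_ge: "real k * lam_lo \<le> \<Lambda>"
  proof -
    have "(\<Sum>j<k. lam_lo) \<le> \<Lambda>" unfolding \<Lambda>_def using lam_bounds by (intro sum_mono) auto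
    then show ?thesis by simp
  qed
  have kpos: "0 < real k" using k1 by simp
  have Lam_pos: "0 < \<Lambda>" using Lam_ge kpos lam_lo_pos by (smt (verit) mult_pos_pos)
  have S_nn: "0 \<le> S" unfolding S_def \<delta>_def
  proof (intro sum_nonneg)
    fix j assume "j \<in> {..<k}"
    have "0 \<le> \<alpha> j * (1 + \<alpha> j) * (norm (x j - x (j - 1)))\<^sup>2" using alpha_nn[of j] by simp
    then show "0 \<le> \<alpha> j * (1 + \<alpha> j) * (norm (x j - x (j - 1)))\<^sup>2 / \<eta> j" using eta_pos[of j] by simp
  qed
  define R where "R = 1 / (real k * \<eta> k) * (Dg / (2 * lam_lo)) + S / real k * (1 / (2 * lam_lo))"
  have R_eq: "R = (b k * Dg + S) / (2 * (real k * lam_lo))"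
    unfolding R_def b_def using eta_pos[of k] kpos lam_lo_pos by (simp add: field_simps)
  have val: "H q \<bullet> (ybar - q) = (\<Sum>j<k. lam j * (H q \<bullet> (y j - q))) / \<Lambda>" for q
  proof -
    have "(\<Sum>j<k. lam j * (H q \<bullet> (y j - q))) = (\<Sum>j<k. lam j * (H q \<bullet> y j)) - \<Lambda> * (H q \<bullet> q)"
      unfolding \<Lambda>_def by (simp add: inner_diff_right right_diff_distrib sum_subtractf sum_distrib_right)
    moreover have "H q \<bullet> (ybar - q) = (\<Sum>j<k. lam j * (H q \<bullet> y j)) / \<Lambda> - H q \<bullet> q"
      unfolding ybar_def by (simp add: inner_diff_right inner_sum_right)
    ultimately show ?thesis using Lam_pos by (simp add: field_simps)
  qed
  have ub: "H q \<bullet> (ybar - q) \<le> R" if "q \<in> Q" for q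
  proof -
    have "H q \<bullet> (ybar - q) \<le> ((b k * Dg + S) / 2) / \<Lambda>"
      unfolding val using main[OF that] Lam_pos by (intro divide_right_mono) auto
    also have "\<dots> \<le> ((b k * Dg + S) / 2) / (real k * lam_lo)"
    proof (rule divide_left_mono)
      show "0 \<le> (b k * Dg + S) / 2" unfolding b_def using eta_pos[of k] Dg_nn S_nn by simp
      show "real k * lam_lo \<le> \<Lambda>" by (rule Lam_ge)
      show "0 < \<Lambda> * (real k * lam_lo)" using Lam_pos kpos lam_lo_pos by simp
    qed
    also have "\<dots> = R" unfolding R_eq by simp
    finally show ?thesis .
  qed
  have bddG: "bdd_above ((\<lambda>q. H q \<bullet> (ybar - q)) ` Q)" using ub by (intro bdd_aboveI2) auto
  have gap_ub: "Gap ybar H Q \<le> R" unfolding Gap_def using Qne ub by (intro cSUP_least) auto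
  have gap_lb': "H q \<bullet> (ybar - q) \<le> Gap ybar H Q" if "q \<in> Q" for q
    unfolding Gap_def using bddG that by (intro cSUP_upper) auto
  have Hcont: "continuous_on X H"
    using lipschitz_on_continuous_on[OF lipH] XD continuous_on_subset by blast
  have "bounded (H ` X)" using compact_continuous_image[OF Hcont X_compact] by (rule compact_imp_bounded)
  then obtain M where M: "\<And>z. z \<in> H ` X \<Longrightarrow> norm z \<le> M" unfolding bounded_iff by blast
  have bddB: "bdd_above ((\<lambda>q. norm (H q)) ` Q)" using M QX by (intro bdd_aboveI2[of _ _ M]) auto
  define B where "B = bound_on H Q"
  have HB: "norm (H q) \<le> B" if "q \<in> Q" for q
    unfolding B_def bound_on_def using bddB that by (intro cSUP_upper) auto
  have B_nn: "0 \<le> B" using Qne HB norm_ge_zero order_trans by blast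
  have lbq: "- B * dist ybar q \<le> Gap ybar H Q" if "q \<in> Q" for q
  proof -
    have "- B * dist ybar q \<le> - (norm (H q) * norm (ybar - q))"
      using HB[OF that] by (simp add: dist_norm mult_right_mono)
    also have "\<dots> \<le> H q \<bullet> (ybar - q)"
      using norm_cauchy_schwarz[of "- H q" "ybar - q"] by simp
    also have "\<dots> \<le> Gap ybar H Q" by (rule gap_lb'[OF that])
    finally show ?thesis .
  qed
  have lb: "- B * infdist ybar Q \<le> Gap ybar H Q"
  proof (cases "B = 0")
    case True
    obtain q0 where "q0 \<in> Q" using Qne by blast
    then show ?thesis using lbq[of q0] True by simp
  next
    case False
    then have Bp: "0 < B" using B_nn by simp
    have "- Gap ybar H Q / B \<le> dist ybar q" if "q \<in> Q" for q
      proof -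
      have "- Gap ybar H Q \<le> dist ybar q * B" using lbq[OF that] by (simp add: mult.commute)
      then have "(- Gap ybar H Q) / B \<le> dist ybar q" by (rule pos_divide_le_eq[OF Bp, THEN iffD2])
      then show ?thesis by (metis minus_divide_left)
    qed
    then have "- Gap ybar H Q / B \<le> infdist ybar Q"
      unfolding infdist_notempty[OF Qne] using Qne by (intro cINF_greatest) auto
    then have "B * (- Gap ybar H Q / B) \<le> B * infdist ybar Q" using Bp by (intro mult_left_mono) auto
    then show ?thesis using Bp by simp
  qed
  show "let \<Lambda> = (\<Sum>j<k. lam j);
         ybar = (1 / \<Lambda>) *\<^sub>R (\<Sum>j<k. lam j *\<^sub>R y j);
         \<delta> = (\<lambda>j. \<alpha> j * (1 + \<alpha> j) * (norm (x j - x (j - 1)))\<^sup>2)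
     in - bound_on H (VI_sol F X) * infdist ybar (VI_sol F X) \<le> Gap ybar H (VI_sol F X)
        \<and> Gap ybar H (VI_sol F X)
            \<le> 1 / (real k * \<eta> k) * ((diameter X)\<^sup>2 / (2 * lam_lo))
              + (\<Sum>j<k. \<delta> j / \<eta> j) / real k * (1 / (2 * lam_lo))"
    unfolding Let_def using lb gap_ub
    unfolding B_def Q_def R_def Dg_def S_def \<delta>_def \<Lambda>_def ybar_def by simp
qed

end
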